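(* Fix $\delta_1,\delta_2,\delta_3>0$. There is a constant $C<\infty$, not depending on $n$ nor on the realisation of the skeleton or of the environment, such that for all sufficiently large $n$, almost surely on the event $A_n\setminus B_n$, $$\mathbb{P}(X_{2n}=0\mid\mathcal{F}\vee\mathcal{G})\le C\sqrt{\frac{\ln n}{n}}.$$
   Context: Setup. On one probability space $(\Omega,\mathcal{A},\mathbb{P})$ let: $(Y_n)_{n\ge0}$ be a simple symmetric random walk on $\mathbb{Z}$ with $Y_0=0$; $(\xi_i^{(y)})_{i\ge1,y\in\mathbb{Z}}$ be i.i.d. geometric variables with $\mathbb{P}(\xi=k)=\tfrac23(\tfrac13)^k$, $k\ge0$; and $\varepsilon=(\varepsilon_y)_{y\in\mathbb{Z}}$ be the environment of the randomly horizontally directed lattice with randomness decaying in power $\beta$: $Q\ge2$ even, $f:\mathbb{Z}\to\{-1,1\}$ $Q$-periodic with $\sum_{y=1}^Q f(y)=0$, $(\rho_y)$ i.i.d. uniform on $\{-1,1\}$, $(\lambda_y)$ independent $\{0,1\}$-valued, independent of $(\rho_y)$, with $\mathbb{P}(\lambda_y=1)=c_0|y|^{-\beta}$ for large $|y|$, and $\varepsilon_y=(1-\lambda_y)f(y)+\lambda_y\rho_y$. The three families $(Y_n)$, $(\xi_i^{(y)})$, $(\lambda_y,\rho_y)$ are mutually independent. Let $\eta_n(y)=\sum_{k=0}^n\mathbf 1_{\{Y_k=y\}}$ (with $\eta_{-1}\equiv0$) and $X_n=\sum_{y\in\mathbb{Z}}\varepsilon_y\sum_{i=1}^{\eta_{n-1}(y)}\xi_i^{(y)}$.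 Let $\mathcal{F}=\sigma(Y_k:k\ge0)$ and $\mathcal{G}=\sigma(\lambda_y,\rho_y:y\in\mathbb{Z})$. For $\delta_1,\delta_2,\delta_3>0$ let $A_{n,1}=\{\max_{0\le k\le 2n}|Y_k|<n^{1/2+\delta_1}\}$, $A_{n,2}=\{\max_{y}\eta_{2n-1}(y)<n^{1/2+\delta_2}\}$, $A_n=A_{n,1}\cap A_{n,2}$, and $B_n=A_n\cap\{|\sum_{y}\varepsilon_y\eta_{2n-1}(y)|>n^{1/2+\delta_3}\}$. *)

theory Defs
  imports "HOL-Probability.Probability"
begin

text \<open>Index type for the elementary independent random variables of the model:
  the increments of the walk, the geometric variables xi_i^(y) (i >= 1),
  and the environment variables lambda_y, rho_y.\<close>
datatype idx = Step nat | Xi nat int | Lam int | Rho int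

text \<open>occ Y m y = number of k < m with Y_k = y, i.e. eta_{m-1}(y) (eta_{-1} = 0).\<close>
definition occ :: "(nat \<Rightarrow> 'a \<Rightarrow> int) \<Rightarrow> nat \<Rightarrow> int \<Rightarrow> 'a \<Rightarrow> nat" where
  "occ Y m y \<omega> = card {k. k < m \<and> Y k \<omega> = y}"

definition env :: "(int \<Rightarrow> int) \<Rightarrow> (int \<Rightarrow> 'a \<Rightarrow> int) \<Rightarrow> (int \<Rightarrow> 'a \<Rightarrow> int) \<Rightarrow> int \<Rightarrow> 'a \<Rightarrow> int" where
  "env f lam rho y \<omega> = (1 - lam y \<omega>) * f y + lam y \<omega> * rho y \<omega>"

text \<open>X_m = sum_y eps_y sum_{i=1}^{eta_{m-1}(y)} xi_i^(y); the sum over y is over the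
  (finite) set of sites visited before time m, outside of which eta_{m-1}(y) = 0.\<close>
definition Xpos :: "(int \<Rightarrow> int) \<Rightarrow> (nat \<Rightarrow> 'a \<Rightarrow> int) \<Rightarrow> (nat \<Rightarrow> int \<Rightarrow> 'a \<Rightarrow> nat)
    \<Rightarrow> (int \<Rightarrow> 'a \<Rightarrow> int) \<Rightarrow> (int \<Rightarrow> 'a \<Rightarrow> int) \<Rightarrow> nat \<Rightarrow> 'a \<Rightarrow> int" where
  "Xpos f Y xi lam rho m \<omega> =
     (\<Sum>y\<in>(\<lambda>k. Y k \<omega>) ` {..<m}.
        env f lam rho y \<omega> * (\<Sum>i=1..occ Y m y \<omega>. int (xi i y \<omega>)))"

definition FG :: "'a measure \<Rightarrow> (nat \<Rightarrow> 'a \<Rightarrow> int) \<Rightarrow> (int \<Rightarrow> 'a \<Rightarrow> int) \<Rightarrow> (int \<Rightarrow> 'a \<Rightarrow> int) \<Rightarrow> 'a measure" where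
  "FG M Y lam rho = sigma (space M)
     ({Y k -` A \<inter> space M | k A. True} \<union> {lam y -` A \<inter> space M | y A. True}
      \<union> {rho y -` A \<inter> space M | y A. True})"

definition elem :: "(nat \<Rightarrow> 'a \<Rightarrow> int) \<Rightarrow> (nat \<Rightarrow> int \<Rightarrow> 'a \<Rightarrow> nat)
    \<Rightarrow> (int \<Rightarrow> 'a \<Rightarrow> int) \<Rightarrow> (int \<Rightarrow> 'a \<Rightarrow> int) \<Rightarrow> idx \<Rightarrow> 'a \<Rightarrow> int" where
  "elem Y xi lam rho j \<omega> = (case j of
      Step k \<Rightarrow> Y (Suc k) \<omega> - Y k \<omega>
    | Xi i y \<Rightarrow> int (xi i y \<omega>)
    | Lam y \<Rightarrow> lam y \<omega>
    | Rho y \<Rightarrow> rho y \<omega>)"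

definition elem_index :: "idx set" where
  "elem_index = {j. case j of Xi i y \<Rightarrow> 1 \<le> i | _ \<Rightarrow> True}"

end

theory Submission
  imports Defs
begin


lemma nb_up:
  fixes p :: "nat \<Rightarrow> real" and m w k0 :: nat
  assumes rec: "\<And>k. 3 * (real k + 1) * p (Suc k) = (real k + real m) * p k"
    and nn: "\<And>k. p k \<ge> 0"
    and w1: "w \<ge> 1" and wm: "16 * real w ^ 2 \<le> real m"
    and k0: "2 * real k0 + 3 \<le> real m"
  shows "t \<le> w \<Longrightarrow> p (k0 + t) \<ge> p k0 * (1 - 1/(2*w)) ^ t"
proof (induction t)
  case 0 then show ?case by simp
next
  case (Suc t)
  define x where "x = 1/(2*real w)"
  have x: "0 < x" "x \<le> 1/2" using w1 by (auto simp: x_def field_simps)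
  have IH: "p (k0 + t) \<ge> p k0 * (1 - x) ^ t" using Suc x_def by simp
  define k where "k = k0 + t"
  have kle: "real k + 1 \<le> real k0 + real w" using Suc k_def by simp
  have "3 * (1 - x) * (real k + 1) \<le> real k + real m"
  proof -
    have "3 * (1 - x) * (real k + 1) - (real k + real m) = (2 - 3*x) * real k + 3 - 3*x - real m"
      by (simp add: algebra_simps)
    also have "\<dots> \<le> (2 - 3*x) * (real k0 + real w - 1) + 3 - 3*x - real m"
      using kle x by (intro add_right_mono diff_right_mono mult_left_mono) auto
    also have "\<dots> \<le> (2 - 3*x) * ((real m - 3)/2 + real w - 1) + 3 - 3*x - real m"
      using k0 x by (intro add_right_mono diff_right_mono mult_left_mono) auto
    also have "\<dots> = - 3*(x*(real m - 3))/2 + 2 * real w - 2 - 3 * (x * real w)"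
      by (simp add: field_simps)
    also have "\<dots> \<le> 0"
    proof -
      have xw: "x * real w = 1/2" using w1 by (simp add: x_def)
      have "x*(real m - 3) \<ge> x * (16 * real w^2 - 3)"
        using wm x by (intro mult_left_mono) auto
      also have "x * (16 * real w^2 - 3) = 8 * real w - 3*x"
        using xw by (simp add: power2_eq_square algebra_simps)
      finally have "x*(real m - 3) \<ge> 8 * real w - 3*x" .
      moreover have "real w \<ge> 1" using w1 by simp
      ultimately show ?thesis using xw x by linarith
    qed
    finally show ?thesis by simp
  qed
  then have r: "(1 - x) * p k \<le> p (Suc k)"
  proof -
    have "3 * (real k + 1) * ((1 - x) * p k) \<le> 3 * (real k + 1) * p (Suc k)"
      using \<open>3 * (1 - x) * (real k + 1) \<le> real k + real m\<close> nn[of k] rec[of k]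
      by (metis (no_types, opaque_lifting) mult.assoc mult.commute mult_right_mono)
    then show ?thesis by (simp add: mult_le_cancel_left_pos)
  qed
  have "p k0 * (1 - x) ^ Suc t = (1 - x) * (p k0 * (1 - x) ^ t)" by simp
  also have "\<dots> \<le> (1 - x) * p k" using IH x k_def by (intro mult_left_mono) auto
  also have "\<dots> \<le> p (Suc k)" by (rule r)
  finally show ?case by (simp add: k_def x_def)
qed

lemma nb_down:
  fixes p :: "nat \<Rightarrow> real" and m w k0 :: nat
  assumes rec: "\<And>k. 3 * (real k + 1) * p (Suc k) = (real k + real m) * p k"
    and nn: "\<And>k. p k \<ge> 0"
    and w1: "w \<ge> 1" and wm: "16 * real w ^ 2 \<le> real m"
    and k0: "2 * real k0 + 2 \<ge> real m" and wk: "w \<le> k0"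
  shows "t \<le> w \<Longrightarrow> p k0 \<le> p (k0 - t) * (1 + 1/(2*w)) ^ t"
proof (induction t)
  case 0 then show ?case by simp
next
  case (Suc t)
  define x where "x = 1/(2*real w)"
  have x: "0 < x" "x \<le> 1/2" using w1 by (auto simp: x_def field_simps)
  have IH: "p k0 \<le> p (k0 - t) * (1 + x) ^ t" using Suc x_def by simp
  define k where "k = k0 - Suc t"
  have kk: "Suc k = k0 - t" using Suc wk k_def by simp
  have kge: "real k \<ge> real k0 - real w" using Suc wk k_def by simp
  have "real k + real m \<le> 3 * (1 + x) * (real k + 1)"
  proof -
    have xw: "x * real w = 1/2" using w1 by (simp add: x_def)
    have "x*real m \<ge> x * (16 * real w^2)"
      using wm x by (intro mult_left_mono) auto
    also have "x * (16 * real w^2) = 8 * real w"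
      using xw by (simp add: power2_eq_square algebra_simps)
    finally have xm: "x*real m \<ge> 8 * real w" .
    have "(2 + 3*x) * real k \<ge> (2 + 3*x) * (real k0 - real w)"
      using kge x by (intro mult_left_mono) auto
    moreover have "(2 + 3*x) * (real k0 - real w) \<ge> (2 + 3*x) * ((real m - 2)/2 - real w)"
      using k0 x by (intro mult_left_mono) auto
    moreover have "(2 + 3*x) * ((real m - 2)/2 - real w) = real m - 2 + 3*(x * real m)/2 - 3 * x - 2 * real w - 3 * (x * real w)"
      by (simp add: field_simps)
    moreover have "3 * (1 + x) * (real k + 1) - (real k + real m) = (2 + 3*x) * real k + 3 + 3*x - real m"
      by (simp add: field_simps)
    moreover have "real w \<ge> 1" using w1 by simp
    ultimately show ?thesis using xw xm x by linarith
  qed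
  then have r: "p (Suc k) \<le> (1 + x) * p k"
  proof -
    have "3 * (real k + 1) * p (Suc k) \<le> 3 * (real k + 1) * ((1 + x) * p k)"
      using \<open>real k + real m \<le> 3 * (1 + x) * (real k + 1)\<close> nn[of k] rec[of k]
      by (metis (no_types, opaque_lifting) mult.assoc mult.commute mult_right_mono)
    then show ?thesis by (simp add: mult_le_cancel_left_pos)
  qed
  have "p k0 \<le> p (Suc k) * (1 + x) ^ t" using IH kk by simp
  also have "\<dots> \<le> (1 + x) * p k * (1 + x) ^ t" using r x by (intro mult_right_mono) auto
  also have "\<dots> = p k * (1 + x) ^ Suc t" by simp
  finally show ?case by (simp add: k_def x_def)
qed

lemma nb_bound:
  fixes p :: "nat \<Rightarrow> real" and m k0 :: nat
  assumes rec: "\<And>k. 3 * (real k + 1) * p (Suc k) = (real k + real m) * p k"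
    and nn: "\<And>k. p k \<ge> 0"
    and sum1: "\<And>a b. sum p {a..b} \<le> 1"
    and m1: "m \<ge> 1"
  shows "p k0 \<le> 8 / sqrt m"
proof (cases "m \<ge> 16")
  case False
  have "p k0 \<le> 1" using sum1[of k0 k0] by simp
  moreover have "sqrt m \<le> 4"
  proof -
    have "sqrt (real m) \<le> sqrt 16" using False by (intro real_sqrt_le_mono) simp
    then show ?thesis by simp
  qed
  moreover have "sqrt m > 0" using m1 by simp
  ultimately have "p k0 * sqrt m \<le> 1 * 4" using nn[of k0] by (intro mult_mono) auto
  then show ?thesis using \<open>sqrt m > 0\<close> by (simp add: field_simps)
next
  case True
  define w where "w = nat \<lfloor>sqrt m / 4\<rfloor>"
  have sq4: "sqrt m \<ge> 4" using True by (simp add: real_le_rsqrt)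
  have fl: "1 \<le> \<lfloor>sqrt m / 4\<rfloor>" using sq4 by simp
  have wr: "real w = real_of_int \<lfloor>sqrt m / 4\<rfloor>" using fl by (simp add: w_def)
  have w_le: "real w \<le> sqrt m / 4" using wr of_int_floor_le[of "sqrt m / 4"] by linarith
  have w_gt: "sqrt m / 4 < real w + 1" using wr by simp
  have w1: "w \<ge> 1" using fl unfolding w_def by linarith
  have wm: "16 * real w ^ 2 \<le> real m"
  proof -
    have "real w ^ 2 \<le> (sqrt m / 4)^2" using w_le by (intro power_mono) auto
    then show ?thesis by (simp add: power_divide)
  qed
  define x where "x = 1 / (2 * real w)"
  have x: "0 < x" "x \<le> 1/2" using w1 by (auto simp: x_def field_simps)
  have xw: "real w * x = 1/2" using w1 by (simp add: x_def)
  have bern: "(1 - x) ^ w \<ge> 1/2"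
    using Bernoulli_inequality[of "-x" w] x xw by simp
  have half: "\<exists>a. \<forall>j\<in>{a..a+w}. p j \<ge> p k0 / 2"
  proof (cases "2 * real k0 + 3 \<le> real m")
    case True
    show ?thesis
    proof (intro exI ballI)
      fix j assume j: "j \<in> {k0..k0+w}"
      define t where "t = j - k0"
      have t: "t \<le> w" "j = k0 + t" using j t_def by auto
      have "p (k0 + t) \<ge> p k0 * (1 - x) ^ t"
        using nb_up[OF rec nn w1 wm True t(1)] by (simp add: x_def)
      moreover have "(1 - x) ^ t \<ge> (1 - x) ^ w" using x t by (intro power_decreasing) auto
      moreover have "p k0 * (1 - x) ^ t \<ge> p k0 * (1 - x) ^ w" using calculation(2) nn[of k0]
        by (intro mult_left_mono) auto
      moreover have "p k0 * (1 - x) ^ w \<ge> p k0 / 2" using bern nn[of k0]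
        by (metis mult_left_mono mult.commute times_divide_eq_right mult.right_neutral divide_le_eq_numeral1(1) zero_less_numeral mult_numeral_1_right)
      ultimately have "p (k0 + t) \<ge> p k0 / 2" by linarith
      then show "p j \<ge> p k0 / 2" using t by simp
    qed
  next
    case False
    then have "real m < real (2*k0+3)" by simp
    then have "m \<le> 2*k0+2" by (simp only: of_nat_less_iff)
    then have "real m \<le> real (2*k0+2)" by (simp only: of_nat_le_iff)
    then have k0: "2 * real k0 + 2 \<ge> real m" by simp
    have wk: "w \<le> k0"
    proof -
      have "real w \<le> sqrt m / 4" by (rule w_le)
      also have "\<dots> \<le> real m / 4"
      proof -
        have s1: "(1::real) \<le> sqrt m" "(0::real) \<le> sqrt m" using sq4 by linarith+
        have "sqrt m * 1 \<le> sqrt m * sqrt m" by (rule mult_left_mono[OF s1])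
        moreover have "sqrt m * sqrt m = real m" using m1 by simp
        ultimately show ?thesis by simp
      qed
      finally show ?thesis using True k0 by linarith
    qed
    have bern2: "(1 + x) ^ w \<le> 2"
    proof -
      have "(1 + x) ^ w * (1 - x) ^ w = (1 - x^2) ^ w" by (simp add: power_mult_distrib[symmetric] algebra_simps power2_eq_square)
      also have "\<dots> \<le> 1" using x by (intro power_le_one) (auto simp: power2_eq_square mult_le_one)
      finally have "(1 + x) ^ w * (1 - x) ^ w \<le> 1" .
      moreover have "(1 + x) ^ w \<ge> 0" using x by simp
      ultimately have "(1 + x) ^ w * (1/2) \<le> 1"
        using bern by (smt (verit) mult_left_mono)
      then show ?thesis by simp
    qed
    show ?thesis
    proof (intro exI ballI)
      fix j assume j: "j \<in> {k0-w..k0-w+w}"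
      define t where "t = k0 - j"
      have t: "t \<le> w" "j = k0 - t" using j t_def wk by auto
      have "p k0 \<le> p (k0 - t) * (1 + x) ^ t"
        using nb_down[OF rec nn w1 wm k0 wk t(1)] by (simp add: x_def)
      also have "\<dots> \<le> p (k0 - t) * (1 + x) ^ w" using x t nn[of "k0-t"]
        by (intro mult_left_mono power_increasing) auto
      also have "\<dots> \<le> p (k0 - t) * 2" using bern2 nn[of "k0-t"] by (intro mult_left_mono) auto
      finally show "p j \<ge> p k0 / 2" using t by simp
    qed
  qed
  then obtain a where a: "\<forall>j\<in>{a..a+w}. p j \<ge> p k0 / 2" by blast
  have "real (card {a..a+w}) * (p k0 / 2) \<le> sum p {a..a+w}"
    using a by (intro sum_bounded_below) auto
  also have "\<dots> \<le> 1" by (rule sum1)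
  finally have "(real w + 1) * p k0 \<le> 2" by (simp add: add.commute)
  then have "(sqrt m / 4) * p k0 \<le> 2"
    using w_gt nn[of k0] by (smt (verit) mult_right_mono)
  then have "p k0 * sqrt m \<le> 8" by (simp add: field_simps)
  moreover have "sqrt m > 0" using sq4 by linarith
  ultimately show ?thesis by (simp add: pos_le_divide_eq)
qed




locale model = prob_space M for M :: "'a measure" +
  fixes Y :: "nat \<Rightarrow> 'a \<Rightarrow> int" and xi :: "nat \<Rightarrow> int \<Rightarrow> 'a \<Rightarrow> nat"
    and lam rho :: "int \<Rightarrow> 'a \<Rightarrow> int" and f :: "int \<Rightarrow> int"
  assumes ind: "indep_vars (\<lambda>_. count_space UNIV) (elem Y xi lam rho) elem_index"
    and Y0: "\<forall>\<omega>\<in>space M. Y 0 \<omega> = 0"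
begin

abbreviation "E \<equiv> elem Y xi lam rho"

definition gen :: "idx \<Rightarrow> 'a set set" where
  "gen j = {E j -` A \<inter> space M | A. True}"

definition SK :: "idx set \<Rightarrow> 'a set set" where
  "SK K = sigma_sets (space M) (\<Union>j\<in>K. gen j)"

definition MK :: "idx set \<Rightarrow> 'a measure" where
  "MK K = sigma (space M) (\<Union>j\<in>K. gen j)"

lemma gen_Pow: "(\<Union>j\<in>K. gen j) \<subseteq> Pow (space M)"
  by (auto simp: gen_def)

lemma sets_MK: "sets (MK K) = SK K"
  unfolding MK_def SK_def using gen_Pow by (simp add: sets_measure_of)

lemma space_MK[simp]: "space (MK K) = space M"
  unfolding MK_def using gen_Pow by (simp add: space_measure_of)

lemma E_meas: "j \<in> elem_index \<Longrightarrow> E j \<in> measurable M (count_space UNIV)"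
  using ind unfolding indep_vars_def2 by auto

lemma gen_events: "j \<in> elem_index \<Longrightarrow> gen j \<subseteq> events"
  using E_meas unfolding gen_def by (auto intro: measurable_sets)

lemma SK_events: "K \<subseteq> elem_index \<Longrightarrow> SK K \<subseteq> events"
  unfolding SK_def using gen_events
  by (intro sets.sigma_sets_subset) auto

lemma indep_gen: "indep_sets gen elem_index"
  using ind unfolding indep_vars_def2 gen_def by simp

lemma indep_split:
  assumes KL: "K \<inter> L = {}" "K \<subseteq> elem_index" "L \<subseteq> elem_index"
    and a: "a \<in> SK K" and b: "b \<in> SK L"
  shows "prob (a \<inter> b) = prob a * prob b"
proof -
  let ?I = "case_bool K L"
  have "indep_sets gen (\<Union>j\<in>UNIV. ?I j)"
    by (rule indep_sets_mono_index[OF _ indep_gen]) (use KL in \<open>auto split: bool.splits\<close>)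
  moreover have "Int_stable (gen i)" for i
    unfolding gen_def Int_stable_def
    by auto (metis vimage_Int Int_assoc Int_absorb Int_commute Int_left_commute)
  moreover have "disjoint_family_on ?I UNIV"
    using KL by (auto simp: disjoint_family_on_def split: bool.split)
  ultimately have I: "indep_sets (\<lambda>j. sigma_sets (space M) (\<Union>i\<in>?I j. gen i)) UNIV"
    by (intro indep_sets_collect_sigma) auto
  have "prob (\<Inter>j\<in>UNIV. case_bool a b j) = (\<Prod>j\<in>UNIV. prob (case_bool a b j))"
    by (rule indep_setsD[OF I]) (use a b in \<open>auto simp: SK_def split: bool.split\<close>)
  then show ?thesis by (simp add: UNIV_bool Int_commute mult.commute)
qed

lemma E_MK: "j \<in> K \<Longrightarrow> E j \<in> measurable (MK K) (count_space UNIV)"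
  by (rule measurableI) (auto simp: sets_MK SK_def gen_def intro!: sigma_sets.Basic)

lemma meas_plus:
  fixes g h :: "'a \<Rightarrow> int"
  assumes "g \<in> measurable N (count_space UNIV)" "h \<in> measurable N (count_space UNIV)"
  shows "(\<lambda>x. g x + h x) \<in> measurable N (count_space UNIV)"
proof -
  have "(\<lambda>x. (\<lambda>i x. i + h x) (g x) x) \<in> measurable N (count_space UNIV)"
    by (rule measurable_compose_countable'[where I=UNIV])
       (auto intro!: measurable_compose[OF assms(2)] simp: assms(1))
  then show ?thesis by simp
qed

lemma meas_times:
  fixes g h :: "'a \<Rightarrow> int"
  assumes "g \<in> measurable N (count_space UNIV)" "h \<in> measurable N (count_space UNIV)"
  shows "(\<lambda>x. g x * h x) \<in> measurable N (count_space UNIV)"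
proof -
  have "(\<lambda>x. (\<lambda>i x. i * h x) (g x) x) \<in> measurable N (count_space UNIV)"
    by (rule measurable_compose_countable'[where I=UNIV])
       (auto intro!: measurable_compose[OF assms(2)] simp: assms(1))
  then show ?thesis by simp
qed

lemma meas_sum:
  fixes g :: "'b \<Rightarrow> 'a \<Rightarrow> int"
  assumes "finite S" "\<And>s. s \<in> S \<Longrightarrow> g s \<in> measurable N (count_space UNIV)"
  shows "(\<lambda>x. \<Sum>s\<in>S. g s x) \<in> measurable N (count_space UNIV)"
  using assms by (induction S rule: finite_induct) (auto intro!: meas_plus)

end



locale model2 = model +
  assumes lam01: "\<forall>y. \<forall>\<omega>\<in>space M. lam y \<omega> \<in> {0,1}"
    and f01: "\<forall>y. f y \<in> {-1,1}"
    and rho1: "\<forall>y. prob {\<omega>\<in>space M. rho y \<omega> = 1} = 1/2"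
    and rhom1: "\<forall>y. prob {\<omega>\<in>space M. rho y \<omega> = -1} = 1/2"
    and geo: "\<forall>i y k. 1 \<le> i \<longrightarrow> prob {\<omega>\<in>space M. xi i y \<omega> = k} = 2/3 * (1/3) ^ k"
begin

definition LV :: "idx set" where "LV = {j. case j of Xi _ _ \<Rightarrow> False | _ \<Rightarrow> True}"
definition XI :: "(nat \<times> int) set \<Rightarrow> idx set" where "XI J = (\<lambda>(i,y). Xi i y) ` J"
definition T :: "(nat \<times> int) set \<Rightarrow> 'a \<Rightarrow> nat" where "T J \<omega> = (\<Sum>(i,y)\<in>J. xi i y \<omega>)"

lemma LV_sub: "LV \<subseteq> elem_index"
  by (auto simp: LV_def elem_index_def split: idx.splits)

lemma XI_sub: "\<forall>(i,y)\<in>J. 1 \<le> i \<Longrightarrow> XI J \<subseteq> elem_index"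
  by (auto simp: XI_def elem_index_def)

lemma XI_disj: "J1 \<inter> J2 = {} \<Longrightarrow> XI J1 \<inter> XI J2 = {}"
  by (auto simp: XI_def)

lemma XI_LV: "XI J \<inter> LV = {}"
  by (auto simp: XI_def LV_def)

lemma setK: "g \<in> measurable (MK K) (count_space UNIV) \<Longrightarrow> {\<omega>\<in>space M. P (g \<omega>)} \<in> SK K"
proof -
  assume g: "g \<in> measurable (MK K) (count_space UNIV)"
  have "g -` {v. P v} \<inter> space (MK K) \<in> sets (MK K)" by (rule measurable_sets[OF g]) simp
  moreover have "g -` {v. P v} \<inter> space (MK K) = {\<omega>\<in>space M. P (g \<omega>)}" by auto
  ultimately show ?thesis by (simp add: sets_MK)
qed

lemma Y_MK: "Step ` {..<k} \<subseteq> K \<Longrightarrow> Y k \<in> measurable (MK K) (count_space UNIV)"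
proof (induction k)
  case 0
  have "(\<lambda>_. 0::int) \<in> measurable (MK K) (count_space UNIV)" by simp
  then show ?case by (rule measurable_cong[THEN iffD1, rotated]) (use Y0 in auto)
next
  case (Suc k)
  have "Step ` {..<k} \<subseteq> K" using Suc.prems by auto
  then have "Y k \<in> measurable (MK K) (count_space UNIV)" by (rule Suc.IH)
  then have "(\<lambda>x. Y k x + E (Step k) x) \<in> measurable (MK K) (count_space UNIV)"
    using Suc.prems by (intro meas_plus E_MK) auto
  then show ?case by (rule measurable_cong[THEN iffD1, rotated]) (simp add: elem_def)
qed

lemma env_MK: "Lam y \<in> K \<Longrightarrow> Rho y \<in> K \<Longrightarrow> env f lam rho y \<in> measurable (MK K) (count_space UNIV)"
proof -
  assume a: "Lam y \<in> K" "Rho y \<in> K"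
  have l: "lam y \<in> measurable (MK K) (count_space UNIV)"
    using E_MK[OF a(1)] by (simp add: elem_def[abs_def])
  have r: "rho y \<in> measurable (MK K) (count_space UNIV)"
    using E_MK[OF a(2)] by (simp add: elem_def[abs_def])
  have c: "\<And>c::int. (\<lambda>x. c) \<in> measurable (MK K) (count_space UNIV)" by simp
  have m1: "(\<lambda>x. - lam y x) \<in> measurable (MK K) (count_space UNIV)"
    using meas_times[OF c l, of "-1"] by simp
  have "(\<lambda>x. 1 + - lam y x) \<in> measurable (MK K) (count_space UNIV)"
    by (rule meas_plus[OF c m1])
  then have "(\<lambda>x. (1 + - lam y x) * f y) \<in> measurable (MK K) (count_space UNIV)"
    by (rule meas_times[OF _ c])
  moreover have "(\<lambda>x. lam y x * rho y x) \<in> measurable (MK K) (count_space UNIV)"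
    by (rule meas_times[OF l r])
  ultimately have "(\<lambda>x. (1 + - lam y x) * f y + lam y x * rho y x) \<in> measurable (MK K) (count_space UNIV)"
    by (rule meas_plus)
  then show ?thesis by (simp add: env_def[abs_def])
qed

lemma envY_MK: "(\<lambda>x. env f lam rho (Y k x) x) \<in> measurable (MK LV) (count_space UNIV)"
proof (rule measurable_compose_countable'[where I=UNIV and f="\<lambda>y x. env f lam rho y x"])
  show "\<And>i. i \<in> UNIV \<Longrightarrow> env f lam rho i \<in> MK LV \<rightarrow>\<^sub>M count_space UNIV"
    by (rule env_MK) (auto simp: LV_def)
  show "Y k \<in> MK LV \<rightarrow>\<^sub>M count_space UNIV" by (rule Y_MK) (auto simp: LV_def)
qed auto

lemma T_MK: "finite J \<Longrightarrow> (\<lambda>\<omega>. int (T J \<omega>)) \<in> measurable (MK (XI J)) (count_space UNIV)"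
proof -
  assume J: "finite J"
  have "(\<lambda>\<omega>. \<Sum>p\<in>J. E (Xi (fst p) (snd p)) \<omega>) \<in> measurable (MK (XI J)) (count_space UNIV)"
    using J by (intro meas_sum[OF J] E_MK) (auto simp: XI_def)
  then show ?thesis by (simp add: T_def elem_def case_prod_beta)
qed

lemma xi_set: "Xi i y \<in> K \<Longrightarrow> {\<omega>\<in>space M. P (xi i y \<omega>)} \<in> SK K"
proof -
  assume a: "Xi i y \<in> K"
  have "{\<omega>\<in>space M. (\<lambda>v. P (nat v)) (E (Xi i y) \<omega>)} \<in> SK K" by (rule setK[OF E_MK[OF a]])
  then show ?thesis by (simp add: elem_def)
qed

lemma T_set: "finite J \<Longrightarrow> {\<omega>\<in>space M. P (T J \<omega>)} \<in> SK (XI J)"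
proof -
  assume a: "finite J"
  have "{\<omega>\<in>space M. (\<lambda>v. P (nat v)) (int (T J \<omega>))} \<in> SK (XI J)" by (rule setK[OF T_MK[OF a]])
  then show ?thesis by simp
qed

lemma T_events: "finite J \<Longrightarrow> \<forall>(i,y)\<in>J. 1 \<le> i \<Longrightarrow> {\<omega>\<in>space M. P (T J \<omega>)} \<in> events"
  using T_set SK_events XI_sub by blast

lemma xi_events: "1 \<le> i \<Longrightarrow> {\<omega>\<in>space M. P (xi i y \<omega>)} \<in> events"
proof -
  assume "1 \<le> i"
  then have "{Xi i y} \<subseteq> elem_index" by (simp add: elem_index_def)
  moreover have "{\<omega>\<in>space M. P (xi i y \<omega>)} \<in> SK {Xi i y}" by (rule xi_set) simp
  ultimately show ?thesis using SK_events by blast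
qed

lemma T_dist:
  assumes "finite J" "J \<noteq> {}" "\<forall>(i,y)\<in>J. 1 \<le> i"
  shows "prob {\<omega>\<in>space M. T J \<omega> = k} = real ((card J - 1 + k) choose k) * (2/3)^(card J) * (1/3)^k"
  using assms
proof (induction J arbitrary: k rule: finite_ne_induct)
  case (singleton a)
  obtain i y where a: "a = (i,y)" by force
  show ?case using singleton geo a by (simp add: T_def)
next
  case (insert a J)
  obtain i0 y0 where a: "a = (i0,y0)" by force
  have i0: "1 \<le> i0" using insert.prems a by auto
  have Jp: "\<forall>(i,y)\<in>J. 1 \<le> i" using insert.prems by auto
  define m where "m = card J"
  have m1: "m \<ge> 1" using insert m_def by (simp add: Suc_leI card_gt_0_iff)
  have cardI: "card (insert a J) = Suc m" using insert m_def by simp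
  have Tins: "T (insert a J) \<omega> = xi i0 y0 \<omega> + T J \<omega>" for \<omega>
    using insert a by (simp add: T_def)
  define A where "A l = {\<omega>\<in>space M. xi i0 y0 \<omega> = k - l} \<inter> {\<omega>\<in>space M. T J \<omega> = l}" for l
  have eq: "{\<omega>\<in>space M. T (insert a J) \<omega> = k} = (\<Union>l\<in>{..k}. A l)"
    by (auto simp: Tins A_def)
  have Kdisj: "XI {a} \<inter> XI J = {}" using insert by (intro XI_disj) auto
  have xa: "Xi i0 y0 \<in> XI {a}" by (simp add: XI_def a)
  have pA: "prob (A l) = 2/3 * (1/3)^(k-l) * (real ((m - 1 + l) choose l) * (2/3)^m * (1/3)^l)" for l
  proof -
    have "prob (A l) = prob {\<omega>\<in>space M. xi i0 y0 \<omega> = k - l} * prob {\<omega>\<in>space M. T J \<omega> = l}"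
      unfolding A_def
    proof (rule indep_split[OF Kdisj])
      show "{\<omega>\<in>space M. xi i0 y0 \<omega> = k - l} \<in> SK (XI {a})" by (rule xi_set[OF xa])
      show "{\<omega>\<in>space M. T J \<omega> = l} \<in> SK (XI J)" by (rule T_set[OF insert.hyps(1)])
      show "XI {a} \<subseteq> elem_index" "XI J \<subseteq> elem_index" using insert.prems by (auto intro!: XI_sub)
    qed
    then show ?thesis using geo i0 insert.IH[OF Jp] m_def by simp
  qed
  have "prob {\<omega>\<in>space M. T (insert a J) \<omega> = k} = (\<Sum>l\<in>{..k}. prob (A l))"
    unfolding eq
  proof (rule finite_measure_finite_Union)
    show "A ` {..k} \<subseteq> events"
      unfolding A_def using i0 insert.hyps(1) Jp
      by (auto intro!: sets.Int T_events xi_events)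
  qed (auto simp: A_def disjoint_family_on_def)
  also have "\<dots> = (\<Sum>l\<in>{..k}. real ((m - 1 + l) choose l)) * (2/3)^(Suc m) * (1/3)^k"
  proof -
    have "prob (A l) = real ((m - 1 + l) choose l) * (2/3)^(Suc m) * (1/3)^k" if "l \<in> {..k}" for l
    proof -
      have "(1/3::real)^(k-l) * (1/3)^l = (1/3)^k" using that by (simp add: power_add[symmetric])
      then show ?thesis unfolding pA by (simp add: algebra_simps)
    qed
    then show ?thesis by (simp add: sum_distrib_right)
  qed
  also have "(\<Sum>l\<in>{..k}. real ((m - 1 + l) choose l)) = real (Suc (m - 1 + k) choose k)"
    by (simp only: of_nat_sum[symmetric] sum_choose_lower)
  also have "Suc (m - 1 + k) = card (insert a J) - 1 + k" using m1 cardI by simp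
  finally show ?case using cardI by simp
qed

end



context model2
begin

lemma T_pmf_bound:
  assumes J: "finite J" "J \<noteq> {}" "\<forall>(i,y)\<in>J. 1 \<le> i"
  shows "prob {\<omega>\<in>space M. T J \<omega> = k} \<le> 8 / sqrt (card J)"
proof -
  define m where "m = card J"
  have m1: "m \<ge> 1" using J m_def by (simp add: Suc_leI card_gt_0_iff)
  define p where "p k = prob {\<omega>\<in>space M. T J \<omega> = k}" for k
  have pf: "p k = real ((m - 1 + k) choose k) * (2/3)^m * (1/3)^k" for k
    unfolding p_def m_def by (rule T_dist[OF J])
  have rec: "3 * (real k + 1) * p (Suc k) = (real k + real m) * p k" for k
  proof -
    have bin: "real (Suc k) * real (m - 1 + Suc k choose Suc k) = real (k + m) * real (m - 1 + k choose k)"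
    proof -
      have "Suc k * (Suc (m - 1 + k) choose Suc k) = Suc (m - 1 + k) * ((m - 1 + k) choose k)"
        by (rule Suc_times_binomial)
      moreover have "Suc (m - 1 + k) = k + m" "m - 1 + Suc k = Suc (m - 1 + k)" using m1 by auto
      ultimately have "Suc k * (m - 1 + Suc k choose Suc k) = (k + m) * ((m - 1 + k) choose k)" by simp
      then show ?thesis by (metis of_nat_mult)
    qed
    have gen: "3 * (real k + 1) * (X * a * (1/3)^(Suc k)) = (real (Suc k) * X) * a * (1/3)^k" for X a :: real
      by (simp add: algebra_simps)
    have "3 * (real k + 1) * p (Suc k) = (real (Suc k) * real (m - 1 + Suc k choose Suc k)) * (2/3)^m * (1/3)^k"
      by (simp only: pf gen)
    also have "\<dots> = (real (k + m) * real (m - 1 + k choose k)) * (2/3)^m * (1/3)^k" by (simp only: bin)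
    also have "\<dots> = (real k + real m) * p k" by (simp only: pf of_nat_add mult.assoc)
    finally show ?thesis .
  qed
  have nn: "p k \<ge> 0" for k unfolding p_def by simp
  have sum1: "sum p {a..b} \<le> 1" for a b
  proof -
    have "sum p {a..b} = prob (\<Union>k\<in>{a..b}. {\<omega>\<in>space M. T J \<omega> = k})"
      unfolding p_def
      by (rule finite_measure_finite_Union[symmetric]) (use J in \<open>auto intro!: T_events simp: disjoint_family_on_def\<close>)
    also have "\<dots> \<le> 1" by (rule prob_le_1)
    finally show ?thesis .
  qed
  have "p k \<le> 8 / sqrt m" by (rule nb_bound[OF rec nn sum1 m1])
  then show ?thesis by (simp add: p_def m_def)
qed

lemma W_bound:
  assumes J1: "finite J1" "J1 \<noteq> {}" "\<forall>(i,y)\<in>J1. 1 \<le> i"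
    and J2: "finite J2" "\<forall>(i,y)\<in>J2. 1 \<le> i" and dj: "J1 \<inter> J2 = {}"
  shows "prob {\<omega>\<in>space M. T J1 \<omega> = T J2 \<omega>} \<le> 8 / sqrt (card J1)"
proof -
  define c where "c = 8 / sqrt (card J1)"
  have c0: "c \<ge> 0" by (simp add: c_def)
  define B where "B k = {\<omega>\<in>space M. T J1 \<omega> = k} \<inter> {\<omega>\<in>space M. T J2 \<omega> = k}" for k
  define C where "C k = {\<omega>\<in>space M. T J2 \<omega> = k}" for k
  have Bev: "range B \<subseteq> events" using J1 J2 by (auto simp: B_def intro!: sets.Int T_events)
  have Cev: "range C \<subseteq> events" using J2 by (auto simp: C_def intro!: T_events)
  have s1: "(\<lambda>k. prob (B k)) sums prob (\<Union>k. B k)"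
    by (rule finite_measure_UNION[OF Bev]) (auto simp: disjoint_family_on_def B_def)
  have s2: "(\<lambda>k. prob (C k)) sums prob (\<Union>k. C k)"
    by (rule finite_measure_UNION[OF Cev]) (auto simp: disjoint_family_on_def C_def)
  have "(\<Union>k. B k) = {\<omega>\<in>space M. T J1 \<omega> = T J2 \<omega>}" by (auto simp: B_def)
  have pB: "prob (B k) \<le> c * prob (C k)" for k
  proof -
    have "prob (B k) = prob {\<omega>\<in>space M. T J1 \<omega> = k} * prob (C k)"
      unfolding B_def C_def
      by (rule indep_split[OF XI_disj[OF dj] XI_sub XI_sub T_set T_set]) (use J1 J2 in auto)
    also have "\<dots> \<le> c * prob (C k)"
      using T_pmf_bound[OF J1] by (intro mult_right_mono) (auto simp: c_def)
    finally show ?thesis .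
  qed
  have "prob (\<Union>k. B k) \<le> c * prob (\<Union>k. C k)"
    using sums_le[OF _ s1 sums_mult[OF s2, of c]] pB by auto
  also have "\<dots> \<le> c * 1" using c0 by (intro mult_left_mono prob_le_1)
  finally show ?thesis using \<open>(\<Union>k. B k) = _\<close> by (simp add: c_def)
qed

end



context model2
begin

definition Dm :: "nat \<Rightarrow> 'a \<Rightarrow> int list \<times> int list" where
  "Dm N \<omega> = (map (\<lambda>k. Y k \<omega>) [0..<N], map (\<lambda>k. env f lam rho (Y k \<omega>) \<omega>) [0..<N])"
definition cnt :: "int list \<Rightarrow> int \<Rightarrow> nat" where
  "cnt p y = card {k. k < length p \<and> p ! k = y}"
definition sg :: "int list \<times> int list \<Rightarrow> int \<Rightarrow> int" where
  "sg d y = snd d ! (LEAST k. k < length (fst d) \<and> fst d ! k = y)"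
definition Jd :: "int list \<times> int list \<Rightarrow> (nat \<times> int) set" where
  "Jd d = prod.swap ` (SIGMA y:set (fst d). {1..cnt (fst d) y})"
definition Jp :: "int list \<times> int list \<Rightarrow> (nat \<times> int) set" where
  "Jp d = Jd d \<inter> {q. sg d (snd q) = 1}"
definition Jm :: "int list \<times> int list \<Rightarrow> (nat \<times> int) set" where
  "Jm d = Jd d - {q. sg d (snd q) = 1}"
definition Ed :: "nat \<Rightarrow> int list \<times> int list \<Rightarrow> 'a set" where
  "Ed N d = {\<omega>\<in>space M. Dm N \<omega> = d}"
definition Bad :: "'a set" where
  "Bad = {\<omega>\<in>space M. \<exists>y. rho y \<omega> \<notin> {1,-1}}"

lemma Jd_fin: "finite (Jd d)"
  by (simp add: Jd_def)

lemma Jd_pos: "\<forall>(i,y)\<in>Jd d. 1 \<le> i"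
  by (auto simp: Jd_def)

lemma Jpm_fin: "finite (Jp d)" "finite (Jm d)"
  by (simp_all add: Jp_def Jm_def Jd_fin)

lemma Jpm_pos: "\<forall>(i,y)\<in>Jp d. 1 \<le> i" "\<forall>(i,y)\<in>Jm d. 1 \<le> i"
  by (auto simp: Jp_def Jm_def Jd_def)

lemma Jpm_disj: "Jp d \<inter> Jm d = {}"
  by (auto simp: Jp_def Jm_def)

lemma sum_cnt: "(\<Sum>y\<in>set p. cnt p y) = length p"
proof -
  have "(\<Union>y\<in>set p. {k. k < length p \<and> p ! k = y}) = {..<length p}"
    by (auto simp: in_set_conv_nth)
  moreover have "card (\<Union>y\<in>set p. {k. k < length p \<and> p ! k = y}) = (\<Sum>y\<in>set p. cnt p y)"
    unfolding cnt_def by (rule card_UN_disjoint) auto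
  ultimately show ?thesis by simp
qed

lemma Jd_card: "card (Jd d) = length (fst d)"
proof -
  have "card (Jd d) = card (SIGMA y:set (fst d). {1..cnt (fst d) y})"
    unfolding Jd_def by (rule card_image) (simp add: inj_on_def)
  also have "\<dots> = (\<Sum>y\<in>set (fst d). cnt (fst d) y)" by simp
  finally show ?thesis by (simp add: sum_cnt)
qed

lemma Jpm_card: "card (Jp d) + card (Jm d) = length (fst d)"
  using card_Int_Diff[OF Jd_fin, of d "{q. sg d (snd q) = 1}"] Jd_card
  by (simp add: Jp_def Jm_def)

lemma Ed_MK: "Ed N d \<in> sets (MK LV)"
proof -
  obtain p e where d: "d = (p, e)" by force
  show ?thesis
  proof (cases "length p = N \<and> length e = N")
    case False
    then have "Ed N d = {}" by (auto simp: Ed_def Dm_def d)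
    then show ?thesis by simp
  next
    case True
    have eq: "Ed N d = {\<omega>\<in>space (MK LV). \<forall>k\<in>{..<N}. Y k \<omega> = p ! k \<and> env f lam rho (Y k \<omega>) \<omega> = e ! k}"
      using True by (auto simp: Ed_def Dm_def d list_eq_iff_nth_eq)
    show ?thesis unfolding eq
    proof (rule sets.sets_Collect_finite_All)
      fix k assume "k \<in> {..<N}"
      have "{\<omega>\<in>space M. Y k \<omega> = p ! k} \<in> SK LV" by (rule setK[OF Y_MK]) (auto simp: LV_def)
      moreover have "{\<omega>\<in>space M. env f lam rho (Y k \<omega>) \<omega> = e ! k} \<in> SK LV" by (rule setK[OF envY_MK])
      ultimately have "{\<omega>\<in>space M. Y k \<omega> = p ! k} \<inter> {\<omega>\<in>space M. env f lam rho (Y k \<omega>) \<omega> = e ! k} \<in> sets (MK LV)"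
        by (simp add: sets_MK[symmetric])
      moreover have "{\<omega>\<in>space M. Y k \<omega> = p ! k} \<inter> {\<omega>\<in>space M. env f lam rho (Y k \<omega>) \<omega> = e ! k}
          = {\<omega>\<in>space (MK LV). Y k \<omega> = p ! k \<and> env f lam rho (Y k \<omega>) \<omega> = e ! k}" by auto
      ultimately show "{\<omega>\<in>space (MK LV). Y k \<omega> = p ! k \<and> env f lam rho (Y k \<omega>) \<omega> = e ! k} \<in> sets (MK LV)"
        by simp
    qed simp
  qed
qed

lemma Ed_SK: "Ed N d \<in> SK LV"
  using Ed_MK sets_MK by simp

lemma Ed_events: "Ed N d \<in> events"
  using Ed_SK SK_events LV_sub by blast

lemma FG_gen_Pow: "({Y k -` A \<inter> space M | k A. True} \<union> {lam y -` A \<inter> space M | y A. True}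
      \<union> {rho y -` A \<inter> space M | y A. True}) \<subseteq> Pow (space M)"
  by auto

lemma sets_FG: "sets (FG M Y lam rho) \<subseteq> SK LV"
proof -
  have sa: "sigma_algebra (space M) (SK LV)"
    unfolding SK_def by (rule sigma_algebra_sigma_sets[OF gen_Pow])
  have G: "({Y k -` A \<inter> space M | k A. True} \<union> {lam y -` A \<inter> space M | y A. True}
      \<union> {rho y -` A \<inter> space M | y A. True}) \<subseteq> SK LV"
  proof (safe)
    fix k A
    have "{\<omega>\<in>space M. Y k \<omega> \<in> A} \<in> SK LV" by (rule setK[OF Y_MK]) (auto simp: LV_def)
    moreover have "Y k -` A \<inter> space M = {\<omega>\<in>space M. Y k \<omega> \<in> A}" by auto
    ultimately show "Y k -` A \<inter> space M \<in> SK LV" by simp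
  next
    fix y A
    have "{\<omega>\<in>space M. E (Lam y) \<omega> \<in> A} \<in> SK LV" by (rule setK[OF E_MK]) (auto simp: LV_def)
    moreover have "lam y -` A \<inter> space M = {\<omega>\<in>space M. E (Lam y) \<omega> \<in> A}" by (auto simp: elem_def)
    ultimately show "lam y -` A \<inter> space M \<in> SK LV" by simp
  next
    fix y A
    have "{\<omega>\<in>space M. E (Rho y) \<omega> \<in> A} \<in> SK LV" by (rule setK[OF E_MK]) (auto simp: LV_def)
    moreover have "rho y -` A \<inter> space M = {\<omega>\<in>space M. E (Rho y) \<omega> \<in> A}" by (auto simp: elem_def)
    ultimately show "rho y -` A \<inter> space M \<in> SK LV" by simp
  qed
  show ?thesis
    unfolding FG_def using sigma_algebra.sigma_sets_subset[OF sa G] FG_gen_Pow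
    by (simp add: sets_measure_of)
qed

lemma space_FG[simp]: "space (FG M Y lam rho) = space M"
  unfolding FG_def using FG_gen_Pow by (simp add: space_measure_of)

lemma subalg_FG: "subalgebra M (FG M Y lam rho)"
  unfolding subalgebra_def using sets_FG SK_events[OF LV_sub] by auto

lemma rho_meas: "rho y \<in> measurable M (count_space UNIV)"
proof -
  have "E (Rho y) \<in> measurable M (count_space UNIV)" by (rule E_meas) (simp add: elem_index_def)
  then show ?thesis by (simp add: elem_def[abs_def])
qed

lemma lam_meas: "lam y \<in> measurable M (count_space UNIV)"
proof -
  have "E (Lam y) \<in> measurable M (count_space UNIV)" by (rule E_meas) (simp add: elem_index_def)
  then show ?thesis by (simp add: elem_def[abs_def])
qed

lemma xi_meas: "1 \<le> i \<Longrightarrow> (\<lambda>\<omega>. int (xi i y \<omega>)) \<in> measurable M (count_space UNIV)"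
proof -
  assume "1 \<le> i"
  then have "E (Xi i y) \<in> measurable M (count_space UNIV)" by (intro E_meas) (simp add: elem_index_def)
  then show ?thesis by (simp add: elem_def[abs_def])
qed

lemma Bad_null: "Bad \<in> null_sets M"
proof -
  have "{\<omega>\<in>space M. rho y \<omega> \<notin> {1,-1}} \<in> null_sets M" for y
  proof -
    have ev: "{\<omega>\<in>space M. rho y \<omega> = c} \<in> events" for c
      using measurable_sets[OF rho_meas, of "{c}" y] by (simp add: vimage_def Int_def conj_commute)
    have "prob ({\<omega>\<in>space M. rho y \<omega> = 1} \<union> {\<omega>\<in>space M. rho y \<omega> = -1})
        = prob {\<omega>\<in>space M. rho y \<omega> = 1} + prob {\<omega>\<in>space M. rho y \<omega> = -1}"
      by (rule finite_measure_Union[OF ev ev]) auto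
    also have "\<dots> = 1" using rho1[rule_format, of y] rhom1[rule_format, of y] by simp
    finally have p1: "prob ({\<omega>\<in>space M. rho y \<omega> = 1} \<union> {\<omega>\<in>space M. rho y \<omega> = -1}) = 1" .
    have eq: "{\<omega>\<in>space M. rho y \<omega> \<notin> {1,-1}} = space M - ({\<omega>\<in>space M. rho y \<omega> = 1} \<union> {\<omega>\<in>space M. rho y \<omega> = -1})"
      by auto
    have "prob {\<omega>\<in>space M. rho y \<omega> \<notin> {1,-1}} = 0"
      unfolding eq using p1 ev by (subst prob_compl) auto
    moreover have "{\<omega>\<in>space M. rho y \<omega> \<notin> {1,-1}} \<in> events" unfolding eq using ev by auto
    ultimately show ?thesis by (simp add: null_sets_def emeasure_eq_measure)
  qed
  then have "(\<Union>y. {\<omega>\<in>space M. rho y \<omega> \<notin> {1,-1}}) \<in> null_sets M" by blast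
  moreover have "Bad = (\<Union>y. {\<omega>\<in>space M. rho y \<omega> \<notin> {1,-1}})" by (auto simp: Bad_def)
  ultimately show ?thesis by simp
qed

lemma env_sign: "\<omega> \<in> space M \<Longrightarrow> \<omega> \<notin> Bad \<Longrightarrow> env f lam rho y \<omega> \<in> {1,-1}"
proof -
  assume a: "\<omega> \<in> space M" "\<omega> \<notin> Bad"
  have l: "lam y \<omega> = 0 \<or> lam y \<omega> = 1" using lam01 a by auto
  have r: "rho y \<omega> \<in> {1,-1}" using a by (auto simp: Bad_def)
  have fy: "f y \<in> {1,-1}" using f01 by auto
  from l show ?thesis
  proof
    assume "lam y \<omega> = 0" then show ?thesis using fy by (simp add: env_def)
  next
    assume "lam y \<omega> = 1" then show ?thesis using r by (simp add: env_def)
  qed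
qed

end



context model2
begin

definition Fd :: "int list \<times> int list \<Rightarrow> 'a \<Rightarrow> int" where
  "Fd d \<omega> = (\<Sum>y\<in>set (fst d). env f lam rho y \<omega> * (\<Sum>i=1..cnt (fst d) y. int (xi i y \<omega>)))"

lemma Xpos_Fd: "Xpos f Y xi lam rho N \<omega> = Fd (Dm N \<omega>) \<omega>"
proof -
  have s: "set (fst (Dm N \<omega>)) = (\<lambda>k. Y k \<omega>) ` {..<N}"
    by (auto simp: Dm_def)
  have c: "cnt (fst (Dm N \<omega>)) y = occ Y N y \<omega>" for y
    unfolding cnt_def occ_def Dm_def by (rule arg_cong[where f=card]) auto
  show ?thesis unfolding Xpos_def Fd_def s c ..
qed

lemma sg_env:
  assumes "y \<in> set (fst (Dm N \<omega>))"
  shows "sg (Dm N \<omega>) y = env f lam rho y \<omega>"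
proof -
  define P where "P k = (k < length (fst (Dm N \<omega>)) \<and> fst (Dm N \<omega>) ! k = y)" for k
  have "\<exists>k. P k" using assms by (auto simp: P_def in_set_conv_nth)
  then have "P (LEAST k. P k)" by (rule LeastI_ex)
  then have k0: "(LEAST k. P k) < N" "Y (LEAST k. P k) \<omega> = y" by (auto simp: P_def Dm_def)
  have "sg (Dm N \<omega>) y = snd (Dm N \<omega>) ! (LEAST k. P k)" unfolding sg_def P_def ..
  also have "\<dots> = env f lam rho (Y (LEAST k. P k) \<omega>) \<omega>" using k0(1) by (simp add: Dm_def)
  finally show ?thesis using k0(2) by simp
qed

lemma MK_to_M: "K \<subseteq> elem_index \<Longrightarrow> g \<in> measurable (MK K) N \<Longrightarrow> g \<in> measurable M N"
proof -
  assume K: "K \<subseteq> elem_index" and g: "g \<in> measurable (MK K) N"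
  show ?thesis
  proof (rule measurableI)
    fix x assume "x \<in> space M" then show "g x \<in> space N" using measurable_space[OF g] by simp
  next
    fix A assume "A \<in> sets N"
    then have "g -` A \<inter> space (MK K) \<in> sets (MK K)" by (rule measurable_sets[OF g])
    then show "g -` A \<inter> space M \<in> sets M" using SK_events[OF K] sets_MK by auto
  qed
qed

lemma env_meas: "env f lam rho y \<in> measurable M (count_space UNIV)"
  by (rule MK_to_M[OF LV_sub env_MK]) (auto simp: LV_def)

lemma Dm_meas: "Dm N \<in> measurable M (count_space UNIV)"
proof (subst measurable_count_space_eq2_countable, safe)
  fix a
  have "Dm N -` {a} \<inter> space M = Ed N a" by (auto simp: Ed_def)
  then show "Dm N -` {a} \<inter> space M \<in> events" using Ed_events by simp
qed simp

lemma Fd_meas: "Fd d \<in> measurable M (count_space UNIV)"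
  unfolding Fd_def[abs_def]
  by (intro meas_sum meas_times env_meas xi_meas) auto

lemma Xpos_meas: "Xpos f Y xi lam rho N \<in> measurable M (count_space UNIV)"
proof -
  have "(\<lambda>\<omega>. Fd (Dm N \<omega>) \<omega>) \<in> measurable M (count_space UNIV)"
    by (rule measurable_compose_countable'[where I=UNIV, OF Fd_meas Dm_meas]) auto
  then show ?thesis by (simp add: Xpos_Fd[abs_def])
qed

lemma Z_events: "{\<omega>\<in>space M. Xpos f Y xi lam rho N \<omega> = 0} \<in> events"
  using measurable_sets[OF Xpos_meas, of "{0}" N] by (simp add: vimage_def Int_def conj_commute)

lemma key:
  assumes w: "\<omega> \<in> Ed N d" "\<omega> \<notin> Bad"
  shows "length (fst d) = N" "\<forall>y\<in>set (fst d). sg d y \<in> {1,-1}"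
    "Xpos f Y xi lam rho N \<omega> = int (T (Jp d) \<omega>) - int (T (Jm d) \<omega>)"
proof -
  have d: "d = Dm N \<omega>" and sp: "\<omega> \<in> space M" using w by (auto simp: Ed_def)
  show "length (fst d) = N" by (simp add: d Dm_def)
  have sgy: "\<forall>y\<in>set (fst d). sg d y = env f lam rho y \<omega>" using sg_env d by blast
  then show sgn: "\<forall>y\<in>set (fst d). sg d y \<in> {1,-1}" using env_sign[OF sp w(2)] by auto
  define g where "g q = int (xi (fst q) (snd q) \<omega>)" for q
  have Tg: "int (T J \<omega>) = (\<Sum>q\<in>J. g q)" for J
    by (simp add: T_def g_def case_prod_beta)
  have sd: "snd q \<in> set (fst d)" if "q \<in> Jd d" for q using that by (auto simp: Jd_def)
  have "(\<Sum>q\<in>Jd d. sg d (snd q) * g q) = (\<Sum>q\<in>Jp d. sg d (snd q) * g q) + (\<Sum>q\<in>Jm d. sg d (snd q) * g q)"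
    unfolding Jp_def Jm_def by (rule sum.Int_Diff[OF Jd_fin])
  also have "(\<Sum>q\<in>Jp d. sg d (snd q) * g q) = (\<Sum>q\<in>Jp d. g q)"
    by (rule sum.cong) (auto simp: Jp_def)
  also have "(\<Sum>q\<in>Jm d. sg d (snd q) * g q) = (\<Sum>q\<in>Jm d. - g q)"
  proof (rule sum.cong)
    fix q assume q: "q \<in> Jm d"
    then have "snd q \<in> set (fst d)" using sd by (auto simp: Jm_def)
    then have "sg d (snd q) \<in> {1,-1}" using sgn by blast
    moreover have "sg d (snd q) \<noteq> 1" using q by (auto simp: Jm_def)
    ultimately have "sg d (snd q) = -1" by auto
    then show "sg d (snd q) * g q = - g q" by simp
  qed simp
  finally have A: "(\<Sum>q\<in>Jd d. sg d (snd q) * g q) = int (T (Jp d) \<omega>) - int (T (Jm d) \<omega>)"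
    by (simp add: Tg sum_negf)
  have "(\<Sum>q\<in>Jd d. sg d (snd q) * g q) = (\<Sum>p\<in>(SIGMA y:set (fst d). {1..cnt (fst d) y}). sg d (fst p) * g (prod.swap p))"
    unfolding Jd_def by (subst sum.reindex) (auto simp: inj_on_def)
  also have "\<dots> = (\<Sum>y\<in>set (fst d). \<Sum>i\<in>{1..cnt (fst d) y}. sg d y * g (i, y))"
  proof -
    have "(\<Sum>y\<in>set (fst d). \<Sum>i\<in>{1..cnt (fst d) y}. sg d y * g (i, y))
        = (\<Sum>(y,i)\<in>(SIGMA y:set (fst d). {1..cnt (fst d) y}). sg d y * g (i, y))"
      by (rule sum.Sigma) auto
    also have "\<dots> = (\<Sum>p\<in>(SIGMA y:set (fst d). {1..cnt (fst d) y}). sg d (fst p) * g (prod.swap p))"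
      by (rule sum.cong) (auto split: prod.splits)
    finally show ?thesis by simp
  qed
  also have "\<dots> = (\<Sum>y\<in>set (fst d). env f lam rho y \<omega> * (\<Sum>i=1..cnt (fst d) y. int (xi i y \<omega>)))"
    using sgy by (auto simp: sum_distrib_left g_def intro!: sum.cong)
  also have "\<dots> = Xpos f Y xi lam rho N \<omega>" by (simp add: Xpos_Fd Fd_def d)
  finally show "Xpos f Y xi lam rho N \<omega> = int (T (Jp d) \<omega>) - int (T (Jm d) \<omega>)" using A by simp
qed

end



context model2
begin

lemma T_MK': "finite J \<Longrightarrow> J \<subseteq> J' \<Longrightarrow> (\<lambda>\<omega>. int (T J \<omega>)) \<in> measurable (MK (XI J')) (count_space UNIV)"
proof -
  assume J: "finite J" "J \<subseteq> J'"
  have "(\<lambda>\<omega>. \<Sum>p\<in>J. E (Xi (fst p) (snd p)) \<omega>) \<in> measurable (MK (XI J')) (count_space UNIV)"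
    using J by (intro meas_sum[OF J(1)] E_MK) (force simp: XI_def)
  then show ?thesis by (simp add: T_def elem_def case_prod_beta)
qed

lemma W_SK: "{\<omega>\<in>space M. T (Jp d) \<omega> = T (Jm d) \<omega>} \<in> SK (XI (Jd d))"
proof -
  have a: "(\<lambda>\<omega>. int (T (Jp d) \<omega>)) \<in> measurable (MK (XI (Jd d))) (count_space UNIV)"
    by (rule T_MK'[OF Jpm_fin(1)]) (auto simp: Jp_def)
  have b: "(\<lambda>\<omega>. int (T (Jm d) \<omega>)) \<in> measurable (MK (XI (Jd d))) (count_space UNIV)"
    by (rule T_MK'[OF Jpm_fin(2)]) (auto simp: Jm_def)
  have c: "(\<lambda>\<omega>. - 1 * int (T (Jm d) \<omega>)) \<in> measurable (MK (XI (Jd d))) (count_space UNIV)"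
    by (rule meas_times[OF _ b]) simp
  have "(\<lambda>\<omega>. int (T (Jp d) \<omega>) + - 1 * int (T (Jm d) \<omega>)) \<in> measurable (MK (XI (Jd d))) (count_space UNIV)"
    by (rule meas_plus[OF a c])
  then have "{\<omega>\<in>space M. (\<lambda>v. v = 0) (int (T (Jp d) \<omega>) + - 1 * int (T (Jm d) \<omega>))} \<in> SK (XI (Jd d))"
    by (rule setK)
  then show ?thesis by simp
qed

lemma perd:
  assumes n: "n \<ge> 1" and A: "A \<in> SK LV"
  shows "prob ({\<omega>\<in>space M. Xpos f Y xi lam rho (2*n) \<omega> = 0} \<inter> A \<inter> Ed (2*n) d)
          \<le> 8 / sqrt n * prob (A \<inter> Ed (2*n) d)"
proof -
  define Z where "Z = {\<omega>\<in>space M. Xpos f Y xi lam rho (2*n) \<omega> = 0}"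
  define c where "c = 8 / sqrt n"
  have c0: "c \<ge> 0" by (simp add: c_def)
  have Bev: "Bad \<in> events" and B0: "prob Bad = 0" using Bad_null by (auto simp: null_sets_def emeasure_eq_measure)
  have AEev: "A \<inter> Ed (2*n) d \<in> events" using A Ed_events SK_events[OF LV_sub] by blast
  show ?thesis
  proof (cases "\<exists>\<omega>0. \<omega>0 \<in> Ed (2*n) d \<and> \<omega>0 \<notin> Bad")
    case False
    then have "Z \<inter> A \<inter> Ed (2*n) d \<subseteq> Bad" by auto
    then have "prob (Z \<inter> A \<inter> Ed (2*n) d) \<le> prob Bad" by (rule finite_measure_mono[OF _ Bev])
    also have "\<dots> \<le> c * prob (A \<inter> Ed (2*n) d)" using B0 c0 by simp
    finally show ?thesis by (simp add: Z_def c_def)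
  next
    case True
    then obtain \<omega>0 where w0: "\<omega>0 \<in> Ed (2*n) d" "\<omega>0 \<notin> Bad" by blast
    have len: "length (fst d) = 2*n" by (rule key(1)[OF w0])
    have cs: "card (Jp d) + card (Jm d) = 2*n" using Jpm_card len by simp
    define W where "W = {\<omega>\<in>space M. T (Jp d) \<omega> = T (Jm d) \<omega>}"
    have WSK: "W \<in> SK (XI (Jd d))" unfolding W_def by (rule W_SK)
    have XIsub: "XI (Jd d) \<subseteq> elem_index" by (rule XI_sub[OF Jd_pos])
    have Wev: "W \<in> events" using WSK SK_events[OF XIsub] by blast
    have pW: "prob W \<le> c"
    proof (cases "card (Jp d) \<ge> n")
      case True
      then have ne: "Jp d \<noteq> {}" using n by auto
      have "prob W \<le> 8 / sqrt (card (Jp d))" unfolding W_def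
        by (rule W_bound[OF Jpm_fin(1) ne Jpm_pos(1) Jpm_fin(2) Jpm_pos(2) Jpm_disj])
      also have "\<dots> \<le> c" unfolding c_def using True n
        by (intro divide_left_mono) (auto intro: mult_pos_pos)
      finally show ?thesis .
    next
      case False
      then have ge: "card (Jm d) \<ge> n" using cs by linarith
      then have ne: "Jm d \<noteq> {}" using n by auto
      have "W = {\<omega>\<in>space M. T (Jm d) \<omega> = T (Jp d) \<omega>}" by (auto simp: W_def)
      then have "prob W \<le> 8 / sqrt (card (Jm d))"
        using W_bound[OF Jpm_fin(2) ne Jpm_pos(2) Jpm_fin(1) Jpm_pos(1)] Jpm_disj[of d] by (simp add: Int_commute)
      also have "\<dots> \<le> c" unfolding c_def using ge n
        by (intro divide_left_mono) (auto intro: mult_pos_pos)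
      finally show ?thesis .
    qed
    have sub: "Z \<inter> A \<inter> Ed (2*n) d \<subseteq> (W \<inter> (A \<inter> Ed (2*n) d)) \<union> Bad"
    proof
      fix \<omega> assume w: "\<omega> \<in> Z \<inter> A \<inter> Ed (2*n) d"
      show "\<omega> \<in> (W \<inter> (A \<inter> Ed (2*n) d)) \<union> Bad"
      proof (cases "\<omega> \<in> Bad")
        case False
        have "Xpos f Y xi lam rho (2*n) \<omega> = int (T (Jp d) \<omega>) - int (T (Jm d) \<omega>)"
          using key(3)[of \<omega> "2*n" d] w False by auto
        then show ?thesis using w by (auto simp: Z_def W_def)
      qed simp
    qed
    have "prob (Z \<inter> A \<inter> Ed (2*n) d) \<le> prob ((W \<inter> (A \<inter> Ed (2*n) d)) \<union> Bad)"
      by (rule finite_measure_mono[OF sub]) (use Wev AEev Bev in auto)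
    also have "\<dots> \<le> prob (W \<inter> (A \<inter> Ed (2*n) d)) + prob Bad"
      by (rule measure_Un_le) (use Wev AEev Bev in auto)
    also have "prob (W \<inter> (A \<inter> Ed (2*n) d)) = prob W * prob (A \<inter> Ed (2*n) d)"
    proof (rule indep_split[OF _ XIsub LV_sub WSK])
      show "XI (Jd d) \<inter> LV = {}" by (rule XI_LV)
      have "A \<inter> Ed (2*n) d \<in> sets (MK LV)" using A Ed_MK sets_MK by (intro sets.Int) auto
      then show "A \<inter> Ed (2*n) d \<in> SK LV" using sets_MK by simp
    qed
    also have "prob W * prob (A \<inter> Ed (2*n) d) + prob Bad \<le> c * prob (A \<inter> Ed (2*n) d)"
      using pW B0 by (simp add: mult_right_mono)
    finally show ?thesis by (simp add: Z_def c_def)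
  qed
qed

end



context model2
begin

lemma sum_bound:
  assumes n: "n \<ge> 1" and A: "A \<in> SK LV"
  shows "prob ({\<omega>\<in>space M. Xpos f Y xi lam rho (2*n) \<omega> = 0} \<inter> A) \<le> 8 / sqrt n * prob A"
proof -
  define Z where "Z = {\<omega>\<in>space M. Xpos f Y xi lam rho (2*n) \<omega> = 0}"
  define c where "c = 8 / sqrt n"
  have c0: "c \<ge> 0" by (simp add: c_def)
  have Aev: "A \<in> events" using A SK_events[OF LV_sub] by blast
  have Zev: "Z \<in> events" unfolding Z_def by (rule Z_events)
  have cov: "X = (\<Union>d\<in>UNIV. X \<inter> Ed (2*n) d)" if "X \<subseteq> space M" for X
    using that by (auto simp: Ed_def)
  have dj: "disjoint_family_on (\<lambda>d. X \<inter> Ed (2*n) d) UNIV" for X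
    by (auto simp: disjoint_family_on_def Ed_def)
  have e1: "emeasure M (Z \<inter> A) = (\<integral>\<^sup>+d. emeasure M (Z \<inter> A \<inter> Ed (2*n) d) \<partial>count_space UNIV)"
    apply (subst cov[of "Z \<inter> A"])
    using Zev apply (auto simp: Z_def)[1]
    apply (rule emeasure_UN_countable)
    using Zev Aev Ed_events dj by auto
  have e2: "emeasure M A = (\<integral>\<^sup>+d. emeasure M (A \<inter> Ed (2*n) d) \<partial>count_space UNIV)"
    apply (subst cov[of A])
    using Aev sets.sets_into_space apply blast
    apply (rule emeasure_UN_countable)
    using Aev Ed_events dj by auto
  have "emeasure M (Z \<inter> A) \<le> (\<integral>\<^sup>+d. ennreal c * emeasure M (A \<inter> Ed (2*n) d) \<partial>count_space UNIV)"
    unfolding e1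
  proof (rule nn_integral_mono)
    fix d
    have "prob (Z \<inter> A \<inter> Ed (2*n) d) \<le> c * prob (A \<inter> Ed (2*n) d)"
      unfolding Z_def c_def by (rule perd[OF n A])
    then have "ennreal (prob (Z \<inter> A \<inter> Ed (2*n) d)) \<le> ennreal c * ennreal (prob (A \<inter> Ed (2*n) d))"
      using c0 by (simp add: ennreal_mult[symmetric])
    then show "emeasure M (Z \<inter> A \<inter> Ed (2*n) d) \<le> ennreal c * emeasure M (A \<inter> Ed (2*n) d)"
      by (simp add: emeasure_eq_measure)
  qed
  also have "\<dots> = ennreal c * emeasure M A"
    unfolding e2 by (rule nn_integral_cmult) simp
  finally have "ennreal (prob (Z \<inter> A)) \<le> ennreal (c * prob A)"
    using c0 by (simp add: emeasure_eq_measure ennreal_mult[symmetric])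
  then have "prob (Z \<inter> A) \<le> c * prob A" using c0 by (simp add: ennreal_le_iff)
  then show ?thesis by (simp add: Z_def c_def)
qed

lemma cond_bound:
  assumes n: "n \<ge> 1"
  shows "AE \<omega> in M. real_cond_exp M (FG M Y lam rho)
                 (indicator {\<omega>\<in>space M. Xpos f Y xi lam rho (2*n) \<omega> = 0}) \<omega> \<le> 8 / sqrt n"
proof -
  define F where "F = FG M Y lam rho"
  define Z where "Z = {\<omega>\<in>space M. Xpos f Y xi lam rho (2*n) \<omega> = 0}"
  define c where "c = 8 / sqrt n"
  define h where "h = (indicator Z :: 'a \<Rightarrow> real)"
  define g where "g = real_cond_exp M F h"
  interpret S: finite_measure_subalgebra M F
    by unfold_locales (simp add: F_def subalg_FG)
  have Zev: "Z \<in> events" unfolding Z_def by (rule Z_events)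
  have hi: "integrable M h" unfolding h_def
    by (rule integrable_real_indicator[OF Zev]) (simp add: emeasure_eq_measure)
  have gi: "integrable M g" unfolding g_def by (rule S.real_cond_exp_int(1)[OF hi])
  have gF: "g \<in> borel_measurable F" unfolding g_def by (rule borel_measurable_cond_exp)
  have null: "{\<omega>\<in>space M. g \<omega> \<ge> c + 1 / (real k + 1)} \<in> null_sets M" for k
  proof -
    define e where "e = 1 / (real k + 1)"
    have e0: "e > 0" by (simp add: e_def)
    define X where "X = {\<omega>\<in>space M. g \<omega> \<ge> c + e}"
    have XF: "X \<in> sets F"
    proof -
      have "g -` {c + e..} \<inter> space F \<in> sets F" by (rule measurable_sets[OF gF]) simp
      moreover have "g -` {c + e..} \<inter> space F = X" by (auto simp: X_def F_def)
      ultimately show ?thesis by simp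
    qed
    have XSK: "X \<in> SK LV" using XF sets_FG by (auto simp: F_def)
    have Xev: "X \<in> events" using XSK SK_events[OF LV_sub] by blast
    have "(\<integral>x. indicator X x * g x \<partial>M) = (\<integral>x. indicator X x * h x \<partial>M)"
      using S.real_cond_exp_intA[OF hi XF] unfolding set_lebesgue_integral_def g_def by simp
    also have "(\<integral>x. indicator X x * h x \<partial>M) = prob (Z \<inter> X)"
    proof -
      have "(\<lambda>x. indicator X x * h x) = (indicator (Z \<inter> X) :: 'a \<Rightarrow> real)"
        by (auto simp: h_def indicator_def fun_eq_iff)
      then show ?thesis using Zev Xev by (simp add: Int_absorb2 sets.sets_into_space)
    qed
    also have "\<dots> \<le> c * prob X" unfolding Z_def c_def by (rule sum_bound[OF n XSK])
    finally have up: "(\<integral>x. indicator X x * g x \<partial>M) \<le> c * prob X" .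
    have "(\<integral>x. indicator X x * (c + e) \<partial>M) \<le> (\<integral>x. indicator X x * g x \<partial>M)"
    proof (rule integral_mono)
      show "integrable M (\<lambda>x. indicator X x * (c + e))"
        by (intro integrable_mult_left integrable_real_indicator[OF Xev]) (simp add: emeasure_eq_measure)
      show "integrable M (\<lambda>x. indicator X x * g x)"
        using integrable_real_mult_indicator[OF Xev gi] by (simp add: mult.commute)
      fix x assume "x \<in> space M"
      then show "indicator X x * (c + e) \<le> indicator X x * g x" by (auto simp: X_def indicator_def)
    qed
    moreover have "(\<integral>x. indicator X x * (c + e) \<partial>M) = prob X * (c + e)"
      using Xev by (simp add: Int_absorb2 sets.sets_into_space)
    ultimately have "prob X * (c + e) \<le> c * prob X" using up by linarith
    then have "prob X * e \<le> 0" by (simp add: algebra_simps)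
    then have "prob X = 0" using e0 measure_nonneg[of M X] by (simp add: mult_le_0_iff)
    then show ?thesis using Xev by (simp add: X_def e_def null_sets_def emeasure_eq_measure)
  qed
  have "AE \<omega> in M. \<forall>k::nat. \<omega> \<notin> {\<omega>\<in>space M. g \<omega> \<ge> c + 1 / (real k + 1)}"
    by (subst AE_all_countable) (intro allI AE_not_in null)
  then have "AE \<omega> in M. g \<omega> \<le> c"
  proof (rule AE_mp[OF _ AE_I2], intro impI)
    fix \<omega> assume sp: "\<omega> \<in> space M" and all: "\<forall>k::nat. \<omega> \<notin> {\<omega>\<in>space M. g \<omega> \<ge> c + 1 / (real k + 1)}"
    show "g \<omega> \<le> c"
    proof (rule ccontr)
      assume "\<not> g \<omega> \<le> c"
      then have "g \<omega> - c > 0" by simp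
      then obtain k :: nat where k: "inverse (real (Suc k)) < g \<omega> - c" using reals_Archimedean by blast
      then have "g \<omega> \<ge> c + 1 / (real k + 1)" by (simp add: inverse_eq_divide add.commute)
      then show False using all sp by auto
    qed
  qed
  then show ?thesis by (simp add: g_def F_def h_def Z_def c_def)
qed

end

theorem lemma5:
  fixes M :: "'a measure"
    and Y :: "nat \<Rightarrow> 'a \<Rightarrow> int"
    and xi :: "nat \<Rightarrow> int \<Rightarrow> 'a \<Rightarrow> nat"
    and lam rho :: "int \<Rightarrow> 'a \<Rightarrow> int"
    and f :: "int \<Rightarrow> int"
    and Q :: nat and \<beta> c0 \<delta>1 \<delta>2 \<delta>3 :: real
  assumes "prob_space M"
    \<comment> \<open>deterministic part of the environment\<close>
    and "Q \<ge> 2" and "even Q"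
    and "\<forall>y. f y \<in> {-1, 1}" and "\<forall>y. f (y + int Q) = f y"
    and "(\<Sum>y=1..int Q. f y) = 0"
    and "\<beta> > 0"
    \<comment> \<open>mutual independence of walk increments, xi's, lambda's, rho's\<close>
    and "prob_space.indep_vars M (\<lambda>_. count_space UNIV) (elem Y xi lam rho) elem_index"
    \<comment> \<open>simple symmetric random walk started at 0\<close>
    and "\<forall>\<omega>\<in>space M. Y 0 \<omega> = 0"
    and "\<forall>k. measure M {\<omega>\<in>space M. Y (Suc k) \<omega> - Y k \<omega> = 1} = 1/2"
    and "\<forall>k. measure M {\<omega>\<in>space M. Y (Suc k) \<omega> - Y k \<omega> = -1} = 1/2"
    \<comment> \<open>geometric variables\<close>
    and "\<forall>i y k. 1 \<le> i \<longrightarrow> measure M {\<omega>\<in>space M. xi i y \<omega> = k} = 2/3 * (1/3) ^ k"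
    \<comment> \<open>environment variables\<close>
    and "\<forall>y. measure M {\<omega>\<in>space M. rho y \<omega> = 1} = 1/2"
    and "\<forall>y. measure M {\<omega>\<in>space M. rho y \<omega> = -1} = 1/2"
    and "\<forall>y. \<forall>\<omega>\<in>space M. lam y \<omega> \<in> {0, 1}"
    and "\<exists>N. \<forall>y. N \<le> \<bar>y\<bar> \<longrightarrow>
           measure M {\<omega>\<in>space M. lam y \<omega> = 1} = c0 * real_of_int \<bar>y\<bar> powr (-\<beta>)"
    and "\<delta>1 > 0" and "\<delta>2 > 0" and "\<delta>3 > 0"
  shows "\<exists>C::real. \<exists>n0. \<forall>n\<ge>n0. AE \<omega> in M.
           ((\<forall>k\<le>2*n. real_of_int \<bar>Y k \<omega>\<bar> < real n powr (1/2 + \<delta>1))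
            \<and> (\<forall>y. real (occ Y (2*n) y \<omega>) < real n powr (1/2 + \<delta>2))
            \<and> \<not> (real_of_int \<bar>\<Sum>y\<in>(\<lambda>k. Y k \<omega>) ` {..<2*n}.
                       env f lam rho y \<omega> * int (occ Y (2*n) y \<omega>)\<bar>
                   > real n powr (1/2 + \<delta>3)))
           \<longrightarrow> real_cond_exp M (FG M Y lam rho)
                 (indicator {\<omega>\<in>space M. Xpos f Y xi lam rho (2*n) \<omega> = 0}) \<omega>
               \<le> C * sqrt (ln (real n) / real n)"
proof -
  have "model2 M Y xi lam rho f"
    unfolding model2_def model2_axioms_def model_def model_axioms_def using assms by auto
  then interpret model2 M Y xi lam rho f .
  have main: "AE \<omega> in M. real_cond_exp M (FG M Y lam rho)
                 (indicator {\<omega>\<in>space M. Xpos f Y xi lam rho (2*n) \<omega> = 0}) \<omega>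
               \<le> 8 * sqrt (ln (real n) / real n)" if n: "3 \<le> n" for n :: nat
  proof -
    have ae: "AE \<omega> in M. real_cond_exp M (FG M Y lam rho)
                 (indicator {\<omega>\<in>space M. Xpos f Y xi lam rho (2*n) \<omega> = 0}) \<omega> \<le> 8 / sqrt n"
      by (rule cond_bound) (use n in simp)
    have "ln 3 \<le> ln (real n)" using n by (subst ln_le_cancel_iff) auto
    then have ln1: "1 \<le> ln (real n)" using ln3_gt_1 by linarith
    then have s1: "1 \<le> sqrt (ln (real n))" by simp
    have sn: "sqrt (real n) > 0" using n by simp
    have "8 / sqrt (real n) = 8 * (1 / sqrt n)" by simp
    also have "\<dots> \<le> 8 * (sqrt (ln (real n)) / sqrt n)"
      using s1 sn by (intro mult_left_mono divide_right_mono) auto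
    also have "\<dots> = 8 * sqrt (ln (real n) / real n)" by (simp add: real_sqrt_divide)
    finally have ineq: "8 / sqrt (real n) \<le> 8 * sqrt (ln (real n) / real n)" .
    show ?thesis using ae by eventually_elim (use ineq in auto)
  qed
  show ?thesis
    apply (rule exI[of _ 8], rule exI[of _ 3], intro allI impI)
    apply (rule AE_mp[OF main], assumption)
    by (rule AE_I2) blast
qed

end
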